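(* Let $q\in(0,1)$ and let $W\in\mathbb{R}^{I\times I}$ be a nonnegative matrix with zero diagonal, $\mathbf{1}^*W\mathbf{1}=1$ and $W\mathbf{1}=W^*\mathbf{1}$. Consider the Asynchronous Asymmetric Gossip Algorithm: at each time $t$, independently of the past, an ordered pair $(i,j)$ is sampled with probability $W_{ij}$, then $x_i(t+1)=(1-q)x_i(t)+qx_j(t)$ and $x_k(t+1)=x_k(t)$ for $k\ne i$. Then for every $t\ge0$, $$\mathbb{E}[(\bar x(t)-\bar x(0))^2]\le\frac{q}{N(1-q)+q}V(x(0)).$$
   Context: $I$ is a finite set of $N$ nodes, $x(0)\in\mathbb{R}^I$ deterministic. $\mathbf{1}$ is the all-ones vector, $W^*$ the transpose. For $y\in\mathbb{R}^I$, $\bar y=\frac1N\sum_i y_i$ and $V(y)=\frac1N\sum_i(y_i-\bar y)^2$. *)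

theory Defs
  imports "HOL-Probability.Probability"
begin

text \<open>Node set I is modelled by a finite type 'i; N = CARD('i).\<close>

definition avg :: "('i::finite \<Rightarrow> real) \<Rightarrow> real" where
  "avg y = (\<Sum>i\<in>UNIV. y i) / real CARD('i)"

definition var :: "('i::finite \<Rightarrow> real) \<Rightarrow> real" where
  "var y = (\<Sum>i\<in>UNIV. (y i - avg y)^2) / real CARD('i)"

definition gossip_step :: "real \<Rightarrow> ('i \<Rightarrow> real) \<Rightarrow> 'i \<times> 'i \<Rightarrow> ('i \<Rightarrow> real)" where
  "gossip_step q x p = (case p of (i, j) \<Rightarrow> x(i := (1 - q) * x i + q * x j))"

definition pair_pmf :: "('i \<Rightarrow> 'i \<Rightarrow> real) \<Rightarrow> ('i \<times> 'i) pmf" where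
  "pair_pmf W = embed_pmf (\<lambda>(i, j). W i j)"

text \<open>Law of x(t): pairs are sampled independently of the past at each time step.\<close>
primrec gossip_dist :: "real \<Rightarrow> ('i \<Rightarrow> 'i \<Rightarrow> real) \<Rightarrow> ('i \<Rightarrow> real) \<Rightarrow> nat \<Rightarrow> ('i \<Rightarrow> real) pmf" where
  "gossip_dist q W x0 0 = return_pmf x0"
| "gossip_dist q W x0 (Suc t) =
     bind_pmf (gossip_dist q W x0 t) (\<lambda>x. map_pmf (gossip_step q x) (pair_pmf W))"

end

theory Submission
  imports Defs
begin

lemma sum_upd: fixes x :: "'i::finite \<Rightarrow> real"
  shows "(\<Sum>k\<in>UNIV. (x(i:=v)) k) = (\<Sum>k\<in>UNIV. x k) + (v - x i)"
proof -
  have "(\<Sum>k\<in>UNIV. (x(i:=v)) k) = (\<Sum>k\<in>UNIV. x k + (if k = i then v - x i else 0))"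
    by (intro sum.cong) auto
  also have "\<dots> = (\<Sum>k\<in>UNIV. x k) + (v - x i)" by (simp add: sum.distrib)
  finally show ?thesis .
qed

lemma sumsq_upd: fixes x :: "'i::finite \<Rightarrow> real"
  shows "(\<Sum>k\<in>UNIV. ((x(i:=v)) k)^2) = (\<Sum>k\<in>UNIV. (x k)^2) + (v^2 - (x i)^2)"
proof -
  have "(\<Sum>k\<in>UNIV. ((x(i:=v)) k)^2) = (\<Sum>k\<in>UNIV. (x k)^2 + (if k = i then v^2 - (x i)^2 else 0))"
    by (intro sum.cong) auto
  also have "\<dots> = (\<Sum>k\<in>UNIV. (x k)^2) + (v^2 - (x i)^2)" by (simp add: sum.distrib)
  finally show ?thesis .
qed

lemma var_alt: fixes x :: "'i::finite \<Rightarrow> real"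
  shows "var x = (\<Sum>k\<in>UNIV. (x k)^2) / real CARD('i) - (avg x)^2"
proof -
  define N where "N = real CARD('i)"
  have N: "N > 0" unfolding N_def by simp
  have "(\<Sum>k\<in>UNIV. (x k - avg x)^2) = (\<Sum>k\<in>UNIV. (x k)^2 - 2 * avg x * x k + (avg x)^2)"
    by (intro sum.cong) (auto simp: power2_eq_square algebra_simps)
  also have "\<dots> = (\<Sum>k\<in>UNIV. (x k)^2) - 2 * avg x * (\<Sum>k\<in>UNIV. x k) + N * (avg x)^2"
    by (simp add: sum.distrib sum_subtractf sum_distrib_left N_def)
  also have "(\<Sum>k\<in>UNIV. x k) = N * avg x" using N unfolding avg_def N_def by simp
  finally show ?thesis unfolding var_def N_def[symmetric] using N
    by (simp add: field_simps power2_eq_square)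
qed

lemma var_nonneg: "var (x::'i::finite \<Rightarrow> real) \<ge> 0"
  unfolding var_def by (intro divide_nonneg_nonneg sum_nonneg) auto

lemma balance_swap:
  fixes W :: "'i::finite \<Rightarrow> 'i \<Rightarrow> real"
  assumes "\<And>i. (\<Sum>j\<in>UNIV. W i j) = (\<Sum>j\<in>UNIV. W j i)"
  shows "(\<Sum>i\<in>UNIV. \<Sum>j\<in>UNIV. W i j * g j) = (\<Sum>i\<in>UNIV. \<Sum>j\<in>UNIV. W i j * g i)"
proof -
  have "(\<Sum>i\<in>UNIV. \<Sum>j\<in>UNIV. W i j * g j) = (\<Sum>j\<in>UNIV. g j * (\<Sum>i\<in>UNIV. W i j))"
    by (subst sum.swap) (simp add: sum_distrib_left mult.commute)
  also have "\<dots> = (\<Sum>j\<in>UNIV. g j * (\<Sum>i\<in>UNIV. W j i))" using assms by simp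
  also have "\<dots> = (\<Sum>i\<in>UNIV. \<Sum>j\<in>UNIV. W i j * g i)"
    by (simp add: sum_distrib_left mult.commute)
  finally show ?thesis .
qed

lemma expand:
  fixes N S Q xi xj q c a0 :: real
  assumes "N > 0"
  defines "d \<equiv> xj - xi"
  shows "((S + q*d)/N - a0)^2 + c * ((Q + ((xi + q*d)^2 - xi^2))/N - ((S + q*d)/N)^2)
    = ((S/N - a0)^2 + c * (Q/N - (S/N)^2))
      + (2*q*(S/N - a0)/N - 2*c*S*q/N^2) * d + (2*c*q/N) * (xi * d)
      + (q^2/N^2 + c*q^2/N - c*q^2/N^2) * d^2"
  using assms by (simp add: field_simps power2_eq_square)


definition Phi :: "real \<Rightarrow> ('i::finite \<Rightarrow> real) \<Rightarrow> ('i \<Rightarrow> real) \<Rightarrow> real" where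
  "Phi q x0 x = (avg x - avg x0)^2 + q / (real CARD('i) * (1 - q) + q) * var x"

lemma Phi_nonneg: "0 < q \<Longrightarrow> q < 1 \<Longrightarrow> Phi q x0 x \<ge> 0"
  unfolding Phi_def using var_nonneg[of x]
  by (intro add_nonneg_nonneg mult_nonneg_nonneg divide_nonneg_pos) (auto intro: add_nonneg_pos)

lemma Phi_step:
  fixes W :: "'i::finite \<Rightarrow> 'i \<Rightarrow> real"
  assumes q: "0 < q" "q < 1"
    and tot: "(\<Sum>i\<in>UNIV. \<Sum>j\<in>UNIV. W i j) = 1"
    and bal: "\<And>i. (\<Sum>j\<in>UNIV. W i j) = (\<Sum>j\<in>UNIV. W j i)"
  shows "(\<Sum>i\<in>UNIV. \<Sum>j\<in>UNIV. W i j * Phi q x0 (gossip_step q x (i,j))) = Phi q x0 x"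
proof -
  define N where "N = real CARD('i)"
  have N: "N > 0" "N \<ge> 1" unfolding N_def by (simp_all add: Suc_leI)
  define c where "c = q / (N * (1 - q) + q)"
  have den: "N * (1 - q) + q > 0" using N q by (intro add_nonneg_pos) auto
  define S where "S = (\<Sum>k\<in>UNIV. x k)"
  define Q where "Q = (\<Sum>k\<in>UNIV. (x k)^2)"
  define a0 where "a0 = avg x0"
  define A where "A = 2*q*(S/N - a0)/N - 2*c*S*q/N^2"
  define B where "B = 2*c*q/N"
  define C where "C = q^2/N^2 + c*q^2/N - c*q^2/N^2"
  have cD: "c * (N * (1 - q) + q) = q" unfolding c_def using den by simp
  have "C - B/2 = q * (q - c * (N * (1 - q) + q)) / N^2"
    unfolding C_def B_def using N by (simp add: field_simps power2_eq_square)
  then have CB: "C = B/2" unfolding cD by simp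
  have Px: "Phi q x0 x = (S/N - a0)^2 + c * (Q/N - (S/N)^2)"
    unfolding Phi_def var_alt avg_def S_def Q_def a0_def N_def c_def by simp
  have Pstep: "Phi q x0 (gossip_step q x (i,j)) = Phi q x0 x + A * (x j - x i)
      + B * (x i * (x j - x i)) + C * (x j - x i)^2" for i j
  proof -
    have e: "(1 - q) * x i + q * x j = x i + q * (x j - x i)" by (simp add: algebra_simps)
    show ?thesis
      unfolding Px A_def B_def C_def
      unfolding gossip_step_def Phi_def var_alt avg_def split e sum_upd sumsq_upd
      unfolding N_def[symmetric] c_def[symmetric] S_def[symmetric] Q_def[symmetric] a0_def[symmetric]
        avg_def[symmetric]
      using expand[OF N(1), of S q "x j" "x i" a0 c Q] by (simp add: a0_def avg_def N_def)
  qed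
  have L1: "(\<Sum>i\<in>UNIV. \<Sum>j\<in>UNIV. W i j * (x j - x i)) = 0"
    using balance_swap[OF bal, of x] by (simp add: algebra_simps sum_subtractf)
  have L2: "(\<Sum>i\<in>UNIV. \<Sum>j\<in>UNIV. W i j * (x i * (x j - x i)))
      = - (1/2) * (\<Sum>i\<in>UNIV. \<Sum>j\<in>UNIV. W i j * (x j - x i)^2)"
  proof -
    have sw: "(\<Sum>i\<in>UNIV. \<Sum>j\<in>UNIV. W i j * (x j)^2) = (\<Sum>i\<in>UNIV. \<Sum>j\<in>UNIV. W i j * (x i)^2)"
      using balance_swap[OF bal, of "\<lambda>k. (x k)^2"] by simp
    have "(\<Sum>i\<in>UNIV. \<Sum>j\<in>UNIV. W i j * (x j - x i)^2) =
      (\<Sum>i\<in>UNIV. \<Sum>j\<in>UNIV. W i j * (x j)^2) + (\<Sum>i\<in>UNIV. \<Sum>j\<in>UNIV. W i j * (x i)^2)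
       - 2 * (\<Sum>i\<in>UNIV. \<Sum>j\<in>UNIV. W i j * (x i * x j))"
      by (simp add: power2_eq_square algebra_simps sum.distrib sum_subtractf sum_distrib_left)
    moreover have "(\<Sum>i\<in>UNIV. \<Sum>j\<in>UNIV. W i j * (x i * (x j - x i))) =
      (\<Sum>i\<in>UNIV. \<Sum>j\<in>UNIV. W i j * (x i * x j)) - (\<Sum>i\<in>UNIV. \<Sum>j\<in>UNIV. W i j * (x i)^2)"
      by (simp add: power2_eq_square algebra_simps sum.distrib sum_subtractf sum_distrib_left)
    ultimately show ?thesis using sw by (simp add: field_simps)
  qed
  have "(\<Sum>i\<in>UNIV. \<Sum>j\<in>UNIV. W i j * Phi q x0 (gossip_step q x (i,j)))
     = (\<Sum>i\<in>UNIV. \<Sum>j\<in>UNIV. W i j * Phi q x0 x + A * (W i j * (x j - x i))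
      + B * (W i j * (x i * (x j - x i))) + C * (W i j * (x j - x i)^2))"
    unfolding Pstep by (simp add: algebra_simps)
  also have "\<dots> = (\<Sum>i\<in>UNIV. \<Sum>j\<in>UNIV. W i j) * Phi q x0 x
      + A * (\<Sum>i\<in>UNIV. \<Sum>j\<in>UNIV. W i j * (x j - x i))
      + B * (\<Sum>i\<in>UNIV. \<Sum>j\<in>UNIV. W i j * (x i * (x j - x i)))
      + C * (\<Sum>i\<in>UNIV. \<Sum>j\<in>UNIV. W i j * (x j - x i)^2)"
    by (simp add: sum.distrib sum_distrib_left sum_distrib_right)
  also have "\<dots> = Phi q x0 x" unfolding tot L1 L2 CB by simp
  finally show ?thesis .
qed


lemma pmf_pair:
  fixes W :: "'i::finite \<Rightarrow> 'i \<Rightarrow> real"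
  assumes nn: "\<And>i j. W i j \<ge> 0"
    and tot: "(\<Sum>i\<in>UNIV. \<Sum>j\<in>UNIV. W i j) = 1"
  shows "pmf (pair_pmf W) (i, j) = W i j"
proof -
  have "(\<integral>\<^sup>+p. ennreal ((\<lambda>(i, j). W i j) p) \<partial>count_space UNIV) = (\<Sum>p\<in>UNIV. ennreal ((\<lambda>(i, j). W i j) p))"
    by (simp add: nn_integral_count_space_finite)
  also have "\<dots> = ennreal (\<Sum>p\<in>UNIV. (\<lambda>(i, j). W i j) p)"
    using nn by (intro sum_ennreal) auto
  also have "(\<Sum>p\<in>UNIV. (\<lambda>(i, j). W i j) p) = (\<Sum>i\<in>UNIV. \<Sum>j\<in>UNIV. W i j)"
    by (simp add: UNIV_Times_UNIV[symmetric] sum.cartesian_product del: UNIV_Times_UNIV)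
  finally have "(\<integral>\<^sup>+p. ennreal ((\<lambda>(i, j). W i j) p) \<partial>count_space UNIV) = 1" using tot by simp
  then show ?thesis unfolding pair_pmf_def
    by (subst pmf_embed_pmf) (use nn in auto)
qed

lemma finite_gossip: "finite (set_pmf (gossip_dist q (W::'i::finite \<Rightarrow> 'i \<Rightarrow> real) x0 t))"
  by (induction t) auto

lemma nn_step:
  fixes W :: "'i::finite \<Rightarrow> 'i \<Rightarrow> real"
  assumes q: "0 < q" "q < 1"
    and nn: "\<And>i j. W i j \<ge> 0"
    and tot: "(\<Sum>i\<in>UNIV. \<Sum>j\<in>UNIV. W i j) = 1"
    and bal: "\<And>i. (\<Sum>j\<in>UNIV. W i j) = (\<Sum>j\<in>UNIV. W j i)"
  shows "(\<integral>\<^sup>+p. ennreal (Phi q x0 (gossip_step q x p)) \<partial>pair_pmf W) = ennreal (Phi q x0 x)"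
proof -
  have "(\<integral>\<^sup>+p. ennreal (Phi q x0 (gossip_step q x p)) \<partial>pair_pmf W)
      = ennreal (measure_pmf.expectation (pair_pmf W) (\<lambda>p. Phi q x0 (gossip_step q x p)))"
    by (intro nn_integral_eq_integral integrable_measure_pmf_finite AE_I2 Phi_nonneg q) auto
  also have "measure_pmf.expectation (pair_pmf W) (\<lambda>p. Phi q x0 (gossip_step q x p))
      = (\<Sum>p\<in>UNIV. Phi q x0 (gossip_step q x p) * pmf (pair_pmf W) p)"
    by (intro integral_measure_pmf_real) auto
  also have "\<dots> = (\<Sum>i\<in>UNIV. \<Sum>j\<in>UNIV. W i j * Phi q x0 (gossip_step q x (i,j)))"
    by (simp add: UNIV_Times_UNIV[symmetric] sum.cartesian_product del: UNIV_Times_UNIV)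
      (intro sum.cong, auto simp: pmf_pair[OF nn tot] mult.commute)
  also have "\<dots> = Phi q x0 x" by (rule Phi_step[OF q tot bal])
  finally show ?thesis .
qed

theorem mainTheorem10:
  fixes q :: real and W :: "'i::finite \<Rightarrow> 'i \<Rightarrow> real" and x0 :: "'i \<Rightarrow> real" and t :: nat
  assumes "0 < q" "q < 1"
    and "\<And>i j. W i j \<ge> 0"
    and "\<And>i. W i i = 0"
    and "(\<Sum>i\<in>UNIV. \<Sum>j\<in>UNIV. W i j) = 1"
    and "\<And>i. (\<Sum>j\<in>UNIV. W i j) = (\<Sum>j\<in>UNIV. W j i)"
  shows "measure_pmf.expectation (gossip_dist q W x0 t) (\<lambda>x. (avg x - avg x0)^2)
           \<le> q / (real CARD('i) * (1 - q) + q) * var x0"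
proof -
  have nnI: "(\<integral>\<^sup>+x. ennreal (Phi q x0 x) \<partial>gossip_dist q W x0 t) = ennreal (Phi q x0 x0)"
  proof (induction t)
    case 0 then show ?case by simp
  next
    case (Suc t)
    have "(\<integral>\<^sup>+x. ennreal (Phi q x0 x) \<partial>gossip_dist q W x0 (Suc t))
       = (\<integral>\<^sup>+x. (\<integral>\<^sup>+p. ennreal (Phi q x0 (gossip_step q x p)) \<partial>pair_pmf W) \<partial>gossip_dist q W x0 t)"
      by simp
    also have "\<dots> = (\<integral>\<^sup>+x. ennreal (Phi q x0 x) \<partial>gossip_dist q W x0 t)"
      by (intro nn_integral_cong nn_step assms)
    finally show ?case using Suc by simp
  qed
  have int: "integrable (gossip_dist q W x0 t) f" for f :: "_ \<Rightarrow> real"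
    by (rule integrable_measure_pmf_finite[OF finite_gossip])
  have "ennreal (measure_pmf.expectation (gossip_dist q W x0 t) (Phi q x0)) = ennreal (Phi q x0 x0)"
    using nnI by (subst nn_integral_eq_integral[symmetric]) (auto intro: int AE_I2 Phi_nonneg assms)
  then have E: "measure_pmf.expectation (gossip_dist q W x0 t) (Phi q x0) = Phi q x0 x0"
    using Phi_nonneg[OF assms(1,2)] by (subst (asm) ennreal_inj) (auto intro: integral_nonneg_AE AE_I2)
  have "measure_pmf.expectation (gossip_dist q W x0 t) (\<lambda>x. (avg x - avg x0)^2)
      \<le> measure_pmf.expectation (gossip_dist q W x0 t) (Phi q x0)"
  proof (intro integral_mono int)
    fix x
    have "N * (1 - q) + q > 0" if "N \<ge> 0" for N :: real using that assms(1,2) by (intro add_nonneg_pos) auto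
    then show "(avg x - avg x0)^2 \<le> Phi q x0 x" unfolding Phi_def using var_nonneg[of x]
      by (intro add_increasing2 mult_nonneg_nonneg divide_nonneg_pos) (use assms(1) in auto)
  qed
  also have "\<dots> = q / (real CARD('i) * (1 - q) + q) * var x0" unfolding E Phi_def by simp
  finally show ?thesis .
qed

end
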